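(* Let $\mathcal{A}$ be a commutative $\sigma$-finite W*-algebra or a commutative AW*-algebra, and let $\mathcal{E}$ be a Hilbert C*-module over $\mathcal{A}$ of rank $d$. Let $n\geq d$ and let $\{\tau_j\}_{j=1}^n$ be a collection of vectors in $\mathcal{E}$ with $\langle \tau_j,\tau_j\rangle=1$ for all $1\leq j\leq n$. Then, for every $m\in\mathbb{N}$, \[ \sum_{j=1}^n\sum_{k=1}^n\|\langle \tau_j, \tau_k\rangle \|^{2m}\geq \sum_{j=1}^n\sum_{k=1}^n\langle \tau_j, \tau_k\rangle ^{m}\langle \tau_k, \tau_j\rangle ^{m}\geq \frac{n^2}{{d+m-1\choose m}}, \] in particular \[ \sum_{j=1}^n\sum_{k=1}^n\|\langle \tau_j, \tau_k\rangle \|^{2} \geq \sum_{j=1}^n\sum_{k=1}^n\langle \tau_j, \tau_k\rangle \langle \tau_k, \tau_j\rangle \geq \frac{n^2}{d}. \] Further (for $n\geq 2$), for every $m\in\mathbb{N}$, \[ \max _{1\leq j,k \leq n,\, j\neq k}\|\langle \tau_j, \tau_k\rangle \|^{2m}\geq \frac{1}{n-1}\left[\frac{n}{{d+m-1\choose m}}-1\right], \] and in particular \[ \max _{1\leq j,k \leq n,\, j\neq k}\|\langle \tau_j, \tau_k\rangle \|^{2}\geq\frac{n-d}{d(n-1)}. \]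
   Context: A W*-algebra is $\sigma$-finite if it contains at most countably many mutually orthogonal (nonzero) projections. A C*-algebra is an AW*-algebra if every set of orthogonal projections has a supremum and every maximal commutative self-adjoint subalgebra is generated by its projections. Such algebras are unital, with identity $1$. The $\mathcal{A}$-valued inner product on $\mathcal{E}$ is linear in the first variable and conjugate-linear in the second; $\mathcal{A}$ acts from the left. $\mathcal{E}$ has rank $d$ if it has an orthonormal basis $\{\omega_j\}_{j=1}^d$, i.e. $\langle\omega_j,\omega_k\rangle=\delta_{jk}1$ and $x=\sum_{j=1}^d\langle x,\omega_j\rangle\omega_j$ for all $x\in\mathcal{E}$. Inequalities between elements of $\mathcal{A}$ refer to the order on self-adjoint elements, a real number $c$ being identified with $c\cdot1$; $\|\cdot\|$ is the C*-norm of $\mathcal{A}$. *)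

theory Defs
  imports "HOL-Analysis.Analysis"
begin

text \<open>
  A commutative unital C*-algebra is modelled on the whole of a type
  'a of class comm_ring_1, real_normed_algebra_1, banach, together with an
  element cj playing the role of the imaginary unit (i times 1, which yields the
  complex scalar multiplication) and an involution st (the star operation).
\<close>


definition csc :: "'a::{comm_ring_1,real_normed_algebra_1,banach} \<Rightarrow> complex \<Rightarrow> 'a \<Rightarrow> 'a" where
  "csc cj c x = (of_real (Re c) + of_real (Im c) * cj) * x"

definition cstar_comm :: "'a::{comm_ring_1,real_normed_algebra_1,banach} \<Rightarrow> ('a \<Rightarrow> 'a) \<Rightarrow> bool" where
  "cstar_comm cj st \<longleftrightarrow>
     cj * cj = -1 \<and>
     (\<forall>c x. norm (csc cj c x) = cmod c * norm x) \<and>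
     (\<forall>x y. st (x + y) = st x + st y) \<and>
     (\<forall>c x. st (csc cj c x) = csc cj (cnj c) (st x)) \<and>
     (\<forall>x y. st (x * y) = st y * st x) \<and>
     (\<forall>x. st (st x) = x) \<and>
     (\<forall>x. norm (st x * x) = (norm x)\<^sup>2)"

definition alg_spectrum :: "'a::{comm_ring_1,real_normed_algebra_1,banach} \<Rightarrow> 'a \<Rightarrow> complex set" where
  "alg_spectrum cj x = {c. \<not> (\<exists>y. (x - csc cj c 1) * y = 1 \<and> y * (x - csc cj c 1) = 1)}"

definition alg_pos :: "'a::{comm_ring_1,real_normed_algebra_1,banach} \<Rightarrow> ('a \<Rightarrow> 'a) \<Rightarrow> 'a \<Rightarrow> bool" where
  "alg_pos cj st x \<longleftrightarrow> st x = x \<and> (\<forall>c\<in>alg_spectrum cj x. Im c = 0 \<and> Re c \<ge> 0)"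

definition alg_le :: "'a::{comm_ring_1,real_normed_algebra_1,banach} \<Rightarrow> ('a \<Rightarrow> 'a) \<Rightarrow> 'a \<Rightarrow> 'a \<Rightarrow> bool" where
  "alg_le cj st x y \<longleftrightarrow> st x = x \<and> st y = y \<and> alg_pos cj st (y - x)"

definition is_proj :: "('a::{comm_ring_1,real_normed_algebra_1,banach} \<Rightarrow> 'a) \<Rightarrow> 'a \<Rightarrow> bool" where
  "is_proj st p \<longleftrightarrow> st p = p \<and> p * p = p"

definition orth_projs :: "('a::{comm_ring_1,real_normed_algebra_1,banach} \<Rightarrow> 'a) \<Rightarrow> 'a set \<Rightarrow> bool" where
  "orth_projs st P \<longleftrightarrow> (\<forall>p\<in>P. is_proj st p) \<and> (\<forall>p\<in>P. \<forall>q\<in>P. p \<noteq> q \<longrightarrow> p * q = 0)"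

definition star_subalg :: "'a::{comm_ring_1,real_normed_algebra_1,banach} \<Rightarrow> ('a \<Rightarrow> 'a) \<Rightarrow> 'a set \<Rightarrow> bool" where
  "star_subalg cj st S \<longleftrightarrow> 0 \<in> S \<and> (\<forall>x\<in>S. \<forall>y\<in>S. x + y \<in> S \<and> x * y \<in> S) \<and>
     (\<forall>c. \<forall>x\<in>S. csc cj c x \<in> S) \<and> (\<forall>x\<in>S. st x \<in> S)"

definition max_comm_sa_subalg :: "'a::{comm_ring_1,real_normed_algebra_1,banach} \<Rightarrow> ('a \<Rightarrow> 'a) \<Rightarrow> 'a set \<Rightarrow> bool" where
  "max_comm_sa_subalg cj st S \<longleftrightarrow> star_subalg cj st S \<and> (\<forall>x\<in>S. \<forall>y\<in>S. x * y = y * x) \<and>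
     (\<forall>T. star_subalg cj st T \<and> (\<forall>x\<in>T. \<forall>y\<in>T. x * y = y * x) \<and> S \<subseteq> T \<longrightarrow> T = S)"

definition cstar_gen :: "'a::{comm_ring_1,real_normed_algebra_1,banach} \<Rightarrow> ('a \<Rightarrow> 'a) \<Rightarrow> 'a set \<Rightarrow> 'a set" where
  "cstar_gen cj st G = \<Inter>{T. G \<subseteq> T \<and> closed T \<and> star_subalg cj st T}"

definition AW_star :: "'a::{comm_ring_1,real_normed_algebra_1,banach} \<Rightarrow> ('a \<Rightarrow> 'a) \<Rightarrow> bool" where
  "AW_star cj st \<longleftrightarrow> cstar_comm cj st \<and>
     (\<forall>P. orth_projs st P \<longrightarrow>
        (\<exists>s. is_proj st s \<and> (\<forall>p\<in>P. alg_le cj st p s) \<and>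
             (\<forall>t. is_proj st t \<and> (\<forall>p\<in>P. alg_le cj st p t) \<longrightarrow> alg_le cj st s t))) \<and>
     (\<forall>S. max_comm_sa_subalg cj st S \<longrightarrow> S = cstar_gen cj st {p\<in>S. is_proj st p})"

text \<open>W*-algebras: C*-algebras that are (isometrically) the dual of a Banach space.
  The predual is realised as a subspace V of the bounded complex-linear functionals.\<close>

definition cfunctional :: "'a::{comm_ring_1,real_normed_algebra_1,banach} \<Rightarrow> ('a \<Rightarrow> complex) \<Rightarrow> bool" where
  "cfunctional cj f \<longleftrightarrow> (\<forall>x y. f (x + y) = f x + f y) \<and> (\<forall>c x. f (csc cj c x) = c * f x) \<and>
     (\<exists>K. \<forall>x. cmod (f x) \<le> K * norm x)"

definition fnorm :: "('a::{comm_ring_1,real_normed_algebra_1,banach} \<Rightarrow> complex) \<Rightarrow> real" where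
  "fnorm f = Sup {cmod (f x) | x. norm x \<le> 1}"

definition W_star :: "'a::{comm_ring_1,real_normed_algebra_1,banach} \<Rightarrow> ('a \<Rightarrow> 'a) \<Rightarrow> bool" where
  "W_star cj st \<longleftrightarrow> cstar_comm cj st \<and>
     (\<exists>V. (\<forall>f\<in>V. cfunctional cj f) \<and> (\<lambda>_. 0) \<in> V \<and>
          (\<forall>f\<in>V. \<forall>g\<in>V. (\<lambda>x. f x + g x) \<in> V) \<and> (\<forall>c. \<forall>f\<in>V. (\<lambda>x. c * f x) \<in> V) \<and>
          (\<forall>x. norm x = Sup {cmod (f x) | f. f \<in> V \<and> fnorm f \<le> 1}) \<and>
          (\<forall>\<phi>. (\<forall>f\<in>V. \<forall>g\<in>V. \<phi> (\<lambda>x. f x + g x) = \<phi> f + \<phi> g) \<and>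
               (\<forall>c. \<forall>f\<in>V. \<phi> (\<lambda>x. c * f x) = c * \<phi> f) \<and>
               (\<exists>K. \<forall>f\<in>V. cmod (\<phi> f) \<le> K * fnorm f)
             \<longrightarrow> (\<exists>a. \<forall>f\<in>V. \<phi> f = f a)))"

definition sigma_finite_alg :: "('a::{comm_ring_1,real_normed_algebra_1,banach} \<Rightarrow> 'a) \<Rightarrow> bool" where
  "sigma_finite_alg st \<longleftrightarrow> (\<forall>P. orth_projs st P \<and> 0 \<notin> P \<longrightarrow> countable P)"

definition hilbert_module :: "'a::{comm_ring_1,real_normed_algebra_1,banach} \<Rightarrow> ('a \<Rightarrow> 'a)
    \<Rightarrow> ('a \<Rightarrow> 'e::ab_group_add \<Rightarrow> 'e) \<Rightarrow> ('e \<Rightarrow> 'e \<Rightarrow> 'a) \<Rightarrow> bool" where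
  "hilbert_module cj st act ip \<longleftrightarrow>
     (\<forall>a b x. act (a + b) x = act a x + act b x) \<and>
     (\<forall>a x y. act a (x + y) = act a x + act a y) \<and>
     (\<forall>a b x. act (a * b) x = act a (act b x)) \<and>
     (\<forall>x. act 1 x = x) \<and>
     (\<forall>x y z. ip (x + y) z = ip x z + ip y z) \<and>
     (\<forall>a x y. ip (act a x) y = a * ip x y) \<and>
     (\<forall>x y. ip y x = st (ip x y)) \<and>
     (\<forall>x. alg_pos cj st (ip x x)) \<and>
     (\<forall>x. ip x x = 0 \<longrightarrow> x = 0) \<and>
     (\<forall>X::nat \<Rightarrow> 'e.
        (\<forall>e>0. \<exists>N. \<forall>p\<ge>N. \<forall>q\<ge>N. sqrt (norm (ip (X p - X q) (X p - X q))) < e) \<longrightarrow>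
        (\<exists>L. (\<lambda>k. sqrt (norm (ip (X k - L) (X k - L)))) \<longlonglongrightarrow> 0))"

definition has_rank :: "('a::{comm_ring_1,real_normed_algebra_1,banach} \<Rightarrow> 'e::ab_group_add \<Rightarrow> 'e)
    \<Rightarrow> ('e \<Rightarrow> 'e \<Rightarrow> 'a) \<Rightarrow> nat \<Rightarrow> bool" where
  "has_rank act ip d \<longleftrightarrow> (\<exists>\<omega>::nat \<Rightarrow> 'e.
     (\<forall>j\<in>{1..d}. \<forall>k\<in>{1..d}. ip (\<omega> j) (\<omega> k) = (if j = k then 1 else 0)) \<and>
     (\<forall>x. x = (\<Sum>j=1..d. act (ip x (\<omega> j)) (\<omega> j))))"

end

theory Submission
  imports Defs "HOL-Library.Multiset"
begin

locale cst =
  fixes cj :: "'a::{comm_ring_1,real_normed_algebra_1,banach}" and st :: "'a \<Rightarrow> 'a"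
  assumes cc: "cstar_comm cj st"
begin

definition phi :: "complex \<Rightarrow> 'a" where "phi c = csc cj c 1"

lemma cj2: "cj * cj = -1" using cc unfolding cstar_comm_def by blast
lemma csc_norm: "norm (csc cj c x) = cmod c * norm x" using cc unfolding cstar_comm_def by blast
lemma st_add: "st (x + y) = st x + st y" using cc unfolding cstar_comm_def by blast
lemma st_csc: "st (csc cj c x) = csc cj (cnj c) (st x)" using cc unfolding cstar_comm_def by blast
lemma st_mult: "st (x * y) = st y * st x" using cc unfolding cstar_comm_def by blast
lemma st_st[simp]: "st (st x) = x" using cc unfolding cstar_comm_def by blast
lemma cstar: "norm (st x * x) = (norm x)\<^sup>2" using cc unfolding cstar_comm_def by blast

lemma csc_phi: "csc cj c x = phi c * x" unfolding phi_def csc_def by simp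
lemma phi_def2: "phi c = of_real (Re c) + of_real (Im c) * cj" unfolding phi_def csc_def by simp
lemma phi_norm[simp]: "norm (phi c) = cmod c" using csc_norm[of c 1] unfolding phi_def by simp
lemma phi_add: "phi (c + d) = phi c + phi d" unfolding phi_def2 by (simp add: algebra_simps)
lemma phi_mult: "phi (c * d) = phi c * phi d"
proof -
  have "phi c * phi d = of_real (Re c * Re d) + of_real (Re c * Im d + Im c * Re d) * cj
     + of_real (Im c * Im d) * (cj * cj)"
    unfolding phi_def2 by (simp add: algebra_simps)
  also have "\<dots> = phi (c * d)" unfolding phi_def2 cj2 by (simp add: algebra_simps)
  finally show ?thesis by simp
qed
lemma phi_of_real[simp]: "phi (complex_of_real r) = of_real r" unfolding phi_def2 by simp
lemma phi_one[simp]: "phi 1 = 1" using phi_of_real[of 1] by simp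
lemma phi_zero[simp]: "phi 0 = 0" using phi_of_real[of 0] by simp
lemma phi_ii: "phi \<i> = cj" unfolding phi_def2 by simp
lemma phi_minus: "phi (- c) = - phi c" using phi_add[of c "-c"] by (simp add: eq_neg_iff_add_eq_0 add.commute)

lemma st_zero[simp]: "st 0 = 0" using st_add[of 0 0] by simp
lemma st_minus: "st (- x) = - st x" using st_add[of x "-x"] by (simp add: eq_neg_iff_add_eq_0 add.commute)
lemma st_diff: "st (x - y) = st x - st y" using st_add[of x "-y"] st_minus[of y] by simp
lemma st_one[simp]: "st 1 = 1"
proof -
  have "st (1 * st 1) = st (st 1) * st 1" by (rule st_mult)
  then show ?thesis by simp
qed
lemma st_phi: "st (phi c) = phi (cnj c)" unfolding phi_def st_csc by simp
lemma st_of_real[simp]: "st (of_real r) = of_real r" using st_phi[of "complex_of_real r"] by simp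
lemma st_cj: "st cj = - cj" using st_phi[of \<i>] by (simp add: phi_ii phi_minus)
lemma st_sum: "st (sum f A) = sum (\<lambda>i. st (f i)) A"
  by (induction A rule: infinite_finite_induct) (auto simp: st_add)
lemma st_power: "st (x ^ n) = st x ^ n"
  by (induction n) (auto simp: st_mult mult.commute)
lemma st_ofr_mult: "st (of_real r * x) = of_real r * st x"
  by (simp add: st_mult mult.commute)
lemma norm_st[simp]: "norm (st x) = norm x"
proof -
  have le: "norm y \<le> norm (st y)" for y
  proof (cases "norm y = 0")
    case False
    have "(norm y)\<^sup>2 \<le> norm (st y) * norm y" using cstar[of y] norm_mult_ineq[of "st y" y] by simp
    then show ?thesis using False by (simp add: power2_eq_square algebra_simps)
  qed simp
  show ?thesis using le[of x] le[of "st x"] by simp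
qed
lemma cstar2: "norm (x * st x) = (norm x)\<^sup>2" using cstar[of x] by (simp add: mult.commute)

lemma neumann:
  assumes "norm (x::'a) < 1" shows "\<exists>y. (1 - x) * y = 1"
proof -
  have s: "summable (\<lambda>n. x ^ n)"
    by (rule summable_comparison_test[of _ "\<lambda>n. norm x ^ n"])
       (auto intro!: exI[of _ 0] norm_power_ineq summable_geometric simp: assms)
  have "(\<lambda>n. (1 - x) * (\<Sum>i<n. x ^ i)) \<longlonglongrightarrow> (1 - x) * suminf (\<lambda>n. x ^ n)"
    using s by (intro tendsto_mult tendsto_const) (simp add: summable_LIMSEQ)
  moreover have "(\<lambda>n. (1 - x) * (\<Sum>i<n. x ^ i)) = (\<lambda>n. 1 - x ^ n)"
    by (rule ext) (simp add: one_diff_power_eq)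
  moreover have "(\<lambda>n. 1 - x ^ n) \<longlonglongrightarrow> 1 - 0"
    using s by (intro tendsto_diff tendsto_const summable_LIMSEQ_zero)
  ultimately show ?thesis using LIMSEQ_unique by fastforce
qed

definition hinv :: "'a \<Rightarrow> bool" where "hinv x \<longleftrightarrow> (\<exists>y. x * y = 1)"

lemma hinv_neg: "hinv (- x) \<longleftrightarrow> hinv x"
proof
  assume "hinv (- x)" then obtain y where "- x * y = 1" unfolding hinv_def by blast
  then have "x * (- y) = 1" by simp
  then show "hinv x" unfolding hinv_def by blast
next
  assume "hinv x" then obtain y where "x * y = 1" unfolding hinv_def by blast
  then have "(- x) * (- y) = 1" by simp
  then show "hinv (- x)" unfolding hinv_def by blast
qed

lemma hinv_small:
  assumes "norm x < cmod l" shows "hinv (x - phi l)"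
proof -
  have l0: "l \<noteq> 0" using assms by auto
  have "norm (phi (1 / l) * x) \<le> norm x / cmod l"
    using norm_mult_ineq[of "phi (1/l)" x] by (simp add: norm_divide divide_inverse mult.commute norm_inverse)
  also have "\<dots> < 1" using assms l0 by (simp add: field_simps)
  finally have "norm (phi (1 / l) * x) < 1" .
  then obtain z where z: "(1 - phi (1 / l) * x) * z = 1" using neumann by blast
  have pl: "phi l * phi (1 / l) = 1" using phi_mult[of l "1/l"] l0 by simp
  have "phi l * (1 - phi (1 / l) * x) = phi l - (phi l * phi (1 / l)) * x"
    by (simp add: algebra_simps)
  hence "x - phi l = - (phi l * (1 - phi (1 / l) * x))"
    by (simp add: pl)
  moreover have "hinv (phi l * (1 - phi (1 / l) * x))"
    unfolding hinv_def
  proof (rule exI[of _ "z * phi (1/l)"])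
    have "phi l * (1 - phi (1 / l) * x) * (z * phi (1 / l)) = (phi l * phi (1/l)) * ((1 - phi (1 / l) * x) * z)"
      by (simp only: ac_simps)
    then show "phi l * (1 - phi (1 / l) * x) * (z * phi (1 / l)) = 1" by (simp add: pl z)
  qed
  ultimately show ?thesis using hinv_neg by simp
qed

lemma selfadj_real_spec:
  assumes h: "st h = h" and im: "Im c \<noteq> 0" shows "hinv (h - phi c)"
proof (rule ccontr)
  assume ni: "\<not> hinv (h - phi c)"
  define k where "k = h - of_real (Re c)"
  define b where "b = Im c"
  have sk: "st k = k" unfolding k_def by (simp add: st_diff h)
  have key: "(b + t)\<^sup>2 \<le> (norm k)\<^sup>2 + t\<^sup>2" for t
  proof -
    have pc: "phi c = of_real (Re c) + phi (\<i> * b)"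
      unfolding b_def phi_def2 by simp
    have "h - phi c = (k + phi (\<i> * t)) - phi (\<i> * (b + t))"
      unfolding k_def pc by (simp add: algebra_simps phi_add)
    hence "\<not> norm (k + phi (\<i> * t)) < cmod (\<i> * (b + t))" using ni hinv_small by metis
    hence 1: "\<bar>b + t\<bar> \<le> norm (k + phi (\<i> * t))" by (simp add: norm_mult flip: of_real_add)
    have sp: "st (phi (\<i> * t)) = - phi (\<i> * t)" by (simp add: st_phi phi_minus)
    have ii: "\<i> * t * (\<i> * t) = - complex_of_real (t\<^sup>2)" by (simp add: power2_eq_square algebra_simps)
    have pp: "phi (\<i> * t) * phi (\<i> * t) = - of_real (t\<^sup>2)"
      unfolding phi_mult[symmetric] ii phi_minus by (simp del: of_real_power)
    have "(norm (k + phi (\<i> * t)))\<^sup>2 = norm (st (k + phi (\<i> * t)) * (k + phi (\<i> * t)))"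
      by (simp add: cstar)
    also have "st (k + phi (\<i> * t)) * (k + phi (\<i> * t)) = k * k + of_real (t\<^sup>2)"
      by (simp add: st_add sk sp algebra_simps pp)
    also have "norm \<dots> \<le> (norm k)\<^sup>2 + t\<^sup>2"
    proof (rule order_trans[OF norm_triangle_ineq])
      have "norm (k * k) \<le> (norm k)\<^sup>2" by (simp add: power2_eq_square norm_mult_ineq)
      moreover have "norm (of_real (t\<^sup>2) :: 'a) = t\<^sup>2" by (simp only: norm_of_real) simp
      ultimately show "norm (k * k) + norm (of_real (t\<^sup>2) :: 'a) \<le> (norm k)\<^sup>2 + t\<^sup>2" by simp
    qed
    finally have "(norm (k + phi (\<i> * t)))\<^sup>2 \<le> (norm k)\<^sup>2 + t\<^sup>2" .
    moreover have "(b + t)\<^sup>2 \<le> (norm (k + phi (\<i> * t)))\<^sup>2"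
      using 1 by (metis abs_ge_zero power2_abs power_mono)
    ultimately show ?thesis by linarith
  qed
  have b0: "b \<noteq> 0" using im b_def by simp
  have "(b + (norm k)\<^sup>2 / (2 * b))\<^sup>2 \<le> (norm k)\<^sup>2 + ((norm k)\<^sup>2 / (2 * b))\<^sup>2"
    by (rule key)
  moreover have "(b + (norm k)\<^sup>2 / (2 * b))\<^sup>2 = b\<^sup>2 + (norm k)\<^sup>2 + ((norm k)\<^sup>2 / (2 * b))\<^sup>2"
    using b0 by (simp add: power2_eq_square field_simps)
  ultimately have "b\<^sup>2 \<le> 0" by linarith
  thus False using b0 by simp
qed

definition inK :: "'a \<Rightarrow> bool" where
  "inK h \<longleftrightarrow> st h = h \<and> (\<exists>s\<ge>0. norm (of_real s - h) \<le> s)"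

lemma inK_pos: assumes "inK h" shows "alg_pos cj st h"
proof -
  obtain s where s: "s \<ge> 0" "norm (of_real s - h) \<le> s" and sh: "st h = h"
    using assms unfolding inK_def by blast
  have "hinv (h - phi c)" if "\<not> (Im c = 0 \<and> Re c \<ge> 0)" for c
  proof (cases "Im c = 0")
    case False thus ?thesis using selfadj_real_spec sh by blast
  next
    case True
    hence rc: "Re c < 0" using that by simp
    have "s < cmod (complex_of_real s - c)"
      using rc s(1) abs_Re_le_cmod[of "complex_of_real s - c"] by simp
    hence "hinv ((of_real s - h) - phi (complex_of_real s - c))"
      using s(2) by (intro hinv_small) simp
    moreover have "phi (complex_of_real s - c) = of_real s - phi c"
      using phi_add[of "complex_of_real s" "-c"] by (simp add: phi_minus)
    moreover have "(of_real s - h) - (of_real s - phi c) = - (h - phi c)" by simp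
    ultimately show ?thesis using hinv_neg by metis
  qed
  thus ?thesis unfolding alg_pos_def alg_spectrum_def hinv_def
    using sh by (auto simp: csc_phi mult.commute)
qed

lemma inK_0[simp]: "inK 0" unfolding inK_def by (auto intro: exI[of _ 0])

lemma inK_add: "inK x \<Longrightarrow> inK y \<Longrightarrow> inK (x + y)"
  unfolding inK_def
proof (elim conjE exE, intro conjI)
  fix s t assume *: "s \<ge> 0" "norm (of_real s - x) \<le> s" "t \<ge> 0" "norm (of_real t - y) \<le> t"
  show "\<exists>u\<ge>0. norm (of_real u - (x + y)) \<le> u"
  proof (intro exI conjI)
    show "norm (of_real (s + t) - (x + y)) \<le> s + t"
      using norm_triangle_ineq[of "of_real s - x" "of_real t - y"] * by (simp add: algebra_simps)
  qed (use * in simp)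
qed (auto simp: st_add)

lemma inK_sum: "(\<And>i. i \<in> A \<Longrightarrow> inK (f i)) \<Longrightarrow> inK (sum f A)"
  by (induction A rule: infinite_finite_induct) (auto intro: inK_add)

lemma inK_scale: assumes "inK x" "r \<ge> 0" shows "inK (of_real r * x)"
proof -
  obtain s where s: "s \<ge> 0" "norm (of_real s - x) \<le> s" "st x = x" using assms unfolding inK_def by blast
  have "norm (of_real (r * s) - of_real r * x) = r * norm (of_real s - x)"
  proof -
    have "of_real (r * s) - of_real r * x = (of_real r * (of_real s - x) :: 'a)" by (simp add: algebra_simps)
    then show ?thesis using assms(2) by (simp flip: scaleR_conv_of_real)
  qed
  also have "\<dots> \<le> r * s" using s assms(2) by (simp add: mult_left_mono)
  finally have "norm (of_real (r * s) - of_real r * x) \<le> r * s" .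
  moreover have "st (of_real r * x) = of_real r * x" using s(3) by (simp add: st_ofr_mult)
  moreover have "r * s \<ge> 0" using s assms(2) by simp
  ultimately show ?thesis unfolding inK_def by blast
qed

lemma inK_of_real: "r \<ge> 0 \<Longrightarrow> inK (of_real r)"
  unfolding inK_def by (auto intro!: exI[of _ r])

lemma inK_bound: assumes "(norm y)\<^sup>2 \<le> r" shows "inK (of_real r - y * st y)"
proof -
  have "norm (of_real r - (of_real r - y * st y)) \<le> r" using assms by (simp add: cstar2)
  moreover have "r \<ge> 0" using assms zero_le_power2[of "norm y"] by linarith
  ultimately show ?thesis unfolding inK_def by (auto simp: st_diff st_mult)
qed

lemma inK_norm: assumes "inK (h - of_real c)" "c \<ge> 0" shows "c \<le> norm h"
proof (rule ccontr)
  assume "\<not> c \<le> norm h"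
  obtain s where s: "s \<ge> 0" "norm (of_real s - (h - of_real c)) \<le> s" using assms unfolding inK_def by blast
  have "norm (of_real (s + c) :: 'a) \<le> norm (of_real s - (h - of_real c)) + norm h"
    using norm_triangle_ineq[of "of_real s - (h - of_real c)" h] by (simp add: algebra_simps)
  moreover have "norm (of_real (s + c) :: 'a) = s + c" using s(1) assms(2) by (simp only: norm_of_real)
  ultimately have "s + c \<le> s + norm h" using s by linarith
  thus False using \<open>\<not> c \<le> norm h\<close> by simp
qed

end

context cst begin

lemma sqrt_ex:
  assumes sx: "st x = x" and nx: "norm x \<le> 1/4"
  shows "\<exists>c. st c = c \<and> c * c = 1 - x"
proof -
  define f where "f y = of_real (1/2) * (x + y * y)" for y
  define S where "S = cball (0::'a) (1/4)"
  have fS: "f ` S \<subseteq> S"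
  proof
    fix z assume "z \<in> f ` S"
    then obtain y where y: "norm y \<le> 1/4" "z = f y" unfolding S_def by auto
    have "norm (y * y) \<le> 1/4 * (1/4)"
      using norm_mult_ineq[of y y] y(1) mult_mono[OF y(1) y(1)] by auto
    hence "norm (x + y * y) \<le> 1/2" using norm_triangle_ineq[of x "y*y"] nx by linarith
    hence "norm (f y) \<le> 1/4" unfolding f_def by (simp flip: scaleR_conv_of_real)
    thus "z \<in> S" using y unfolding S_def by simp
  qed
  have lip: "dist (f y) (f z) \<le> 1/4 * dist y z" if "y \<in> S" "z \<in> S" for y z
  proof -
    have ny: "norm y \<le> 1/4" "norm z \<le> 1/4" using that unfolding S_def by auto
    have "f y - f z = of_real (1/2) * ((y + z) * (y - z))" unfolding f_def by (simp add: algebra_simps)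
    hence "norm (f y - f z) = 1/2 * norm ((y + z) * (y - z))" by (simp flip: scaleR_conv_of_real)
    also have "\<dots> \<le> 1/2 * (norm (y + z) * norm (y - z))" by (simp add: norm_mult_ineq)
    also have "\<dots> \<le> 1/2 * ((1/2) * norm (y - z))"
    proof -
      have "norm (y + z) \<le> 1/2" using norm_triangle_ineq[of y z] ny by linarith
      hence "norm (y + z) * norm (y - z) \<le> (1/2) * norm (y - z)" by (rule mult_right_mono) simp
      thus ?thesis by (simp add: mult.commute)
    qed
    finally show ?thesis by (simp add: dist_norm)
  qed
  have "\<exists>!y\<in>S. f y = y"
    by (rule Banach_fix[OF _ _ _ _ fS lip]) (auto simp: S_def complete_eq_closed)
  then obtain y where y: "y \<in> S" "f y = y" and uq: "\<And>z. z \<in> S \<Longrightarrow> f z = z \<Longrightarrow> z = y" by blast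
  have "st y \<in> S" using y(1) unfolding S_def by simp
  moreover have "f (st y) = st y"
  proof -
    have "f (st y) = st (f y)" unfolding f_def by (simp add: st_ofr_mult st_add st_mult sx)
    thus ?thesis using y(2) by simp
  qed
  ultimately have sy: "st y = y" using uq by blast
  have "2 * y = x + y * y"
  proof -
    have "y = of_real (1/2) * (x + y * y)" using y(2) unfolding f_def by simp
    hence "of_real 2 * y = of_real 2 * of_real (1/2) * (x + y * y)" by (simp add: mult.assoc)
    also have "of_real 2 * of_real (1/2) = (1::'a)" by (simp only: of_real_mult[symmetric]) simp
    finally show ?thesis by simp
  qed
  hence "(1 - y) * (1 - y) = 1 - x" by (simp add: algebra_simps)
  moreover have "st (1 - y) = 1 - y" by (simp add: st_diff sy)
  ultimately show ?thesis by blast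
qed

lemma norm_cj_mult: "norm (cj * c) = norm c"
  using csc_norm[of \<i> c] by (simp add: csc_phi phi_ii)

lemma inK_sq: assumes sa: "st a = a" shows "inK (a * a)"
proof (cases "a = 0")
  case True thus ?thesis by simp
next
  case False
  define r where "r = norm a"
  have r0: "r > 0" using False r_def by simp
  define b where "b = of_real (1 / (2 * r)) * a"
  have nb: "norm b = 1/2" unfolding b_def r_def using r0 r_def by (simp flip: scaleR_conv_of_real)
  have sb: "st b = b" unfolding b_def by (simp add: st_ofr_mult sa)
  have "norm (b * b) \<le> 1/4" using norm_mult_ineq[of b b] nb by simp
  moreover have "st (b * b) = b * b" by (simp add: st_mult sb)
  ultimately obtain c where sc: "st c = c" and cc: "c * c = 1 - b * b" using sqrt_ex by blast
  define u where "u = b + cj * c"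
  have su: "st u = b - cj * c" unfolding u_def by (simp add: st_add st_mult sb sc st_cj)
  have "st u * u = (b - cj * c) * u" by (simp add: su)
  also have "\<dots> = b * b - (cj * cj) * (c * c)" unfolding u_def by (simp add: algebra_simps)
  also have "\<dots> = 1" by (simp add: cj2 cc)
  finally have "(norm u)\<^sup>2 = 1" using cstar[of u] by simp
  hence nu: "norm u = 1" using norm_ge_zero[of u] by (auto simp add: power2_eq_1_iff)
  have "u - st u = u - (b - cj * c)" by (simp only: su)
  hence "(2::real) *\<^sub>R (cj * c) = u - st u" unfolding u_def by (simp add: algebra_simps scaleR_2)
  hence "2 * norm (cj * c) = norm (u - st u)" by (metis norm_scaleR abs_numeral)
  also have "\<dots> \<le> 2" using norm_triangle_ineq4[of u "st u"] nu by simp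
  finally have nc: "norm c \<le> 1" by (simp add: norm_cj_mult)
  have n1: "norm (1 - b * b) \<le> 1"
    using norm_mult_ineq[of c c] mult_mono[OF nc nc] cc by simp
  have "of_real (2 * r) * b = of_real ((2 * r) * (1 / (2 * r))) * a" unfolding b_def by (simp only: of_real_mult mult.assoc)
  also have "(2 * r) * (1 / (2 * r)) = 1" using r0 by simp
  finally have "a = of_real (2 * r) * b" by simp
  hence "of_real (4 * r^2) - a * a = of_real (4 * r^2) * (1 - b * b)"
    by (simp add: algebra_simps power2_eq_square flip: of_real_mult)
  hence eq: "of_real (4 * r^2) - a * a = (4 * r^2) *\<^sub>R (1 - b * b)" by (simp only: scaleR_conv_of_real)
  have "norm (of_real (4 * r^2) - a * a) = 4 * r^2 * norm (1 - b * b)" unfolding eq by simp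
  also have "\<dots> \<le> 4 * r^2" using n1 by (simp add: mult_left_le)
  finally have "norm (of_real (4 * r^2) - a * a) \<le> 4 * r^2" .
  moreover have "st (a * a) = a * a" by (simp add: st_mult sa)
  ultimately show ?thesis unfolding inK_def by (intro conjI exI[of _ "4 * r^2"]) auto
qed

end

lemma var_identity:
  fixes p :: "'i \<Rightarrow> 'a::{comm_ring_1,real_algebra_1}"
  assumes "finite I"
  shows "(\<Sum>i\<in>I. \<Sum>l\<in>I. (p i - p l)^2) = of_real (2 * real (card I)) * (\<Sum>i\<in>I. p i^2) - 2 * (\<Sum>i\<in>I. p i)^2"
proof -
  have "(\<Sum>i\<in>I. \<Sum>l\<in>I. (p i - p l)^2) = (\<Sum>i\<in>I. \<Sum>l\<in>I. p i^2 + p l^2 - 2 * (p i * p l))"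
    by (simp add: power2_diff algebra_simps)
  also have "\<dots> = (\<Sum>i\<in>I. of_nat (card I) * p i^2 + (\<Sum>l\<in>I. p l^2) - 2 * (\<Sum>l\<in>I. p i * p l))"
    by (simp add: sum.distrib sum_subtractf sum_distrib_left)
  also have "\<dots> = of_nat (card I) * (\<Sum>i\<in>I. p i^2) + of_nat (card I) * (\<Sum>l\<in>I. p l^2) - 2 * (\<Sum>i\<in>I. \<Sum>l\<in>I. p i * p l)"
    by (simp add: sum.distrib sum_subtractf sum_distrib_left)
  also have "(\<Sum>i\<in>I. \<Sum>l\<in>I. p i * p l) = (\<Sum>i\<in>I. p i)^2"
    by (simp add: power2_eq_square sum_product)
  finally show ?thesis by (simp add: algebra_simps)
qed

context cst begin

lemma inK_ysty: "inK (y * st y)"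
proof -
  define p where "p = y + st y"
  define q where "q = cj * (st y - y)"
  have sp: "st p = p" unfolding p_def by (simp add: st_add add.commute)
  have sq: "st q = q" unfolding q_def by (simp add: st_mult st_diff st_cj algebra_simps)
  have "p * p + q * q = of_real 4 * (y * st y)"
  proof -
    have "q * q = (cj * cj) * ((st y - y) * (st y - y))" unfolding q_def by (simp add: algebra_simps)
    thus ?thesis unfolding p_def by (simp add: cj2 algebra_simps)
  qed
  moreover have "of_real (1/4) * (of_real 4 * z) = (z::'a)" for z
    by (simp only: mult.assoc[symmetric] of_real_mult[symmetric]) simp
  ultimately have "y * st y = of_real (1/4) * (p * p + q * q)" by metis
  thus ?thesis using inK_scale inK_add inK_sq sp sq by simp
qed

lemma st_sa_sq: "st (x * st x) = x * st x" by (simp add: st_mult mult.commute)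

lemma gram:
  fixes b :: "'j \<Rightarrow> 'i \<Rightarrow> 'a"
  assumes fJ: "finite J" and fI: "finite I"
  shows "inK ((\<Sum>j\<in>J. \<Sum>k\<in>J. (\<Sum>i\<in>I. b j i * st (b k i)) * st (\<Sum>i\<in>I. b j i * st (b k i)))
     - of_real (1 / real (card I)) * (\<Sum>j\<in>J. \<Sum>i\<in>I. b j i * st (b j i))^2)"
proof -
  define S where "S i l = (\<Sum>j\<in>J. b j i * st (b j l))" for i l
  define p where "p i = S i i" for i
  have sS: "st (S i l) = (\<Sum>j\<in>J. b j l * st (b j i))" for i l
    unfolding S_def by (simp add: st_sum st_mult mult.commute)
  have sp: "st (p i) = p i" for i using sS[of i i] unfolding p_def S_def by simp
  have step1: "(\<Sum>j\<in>J. \<Sum>k\<in>J. (\<Sum>i\<in>I. b j i * st (b k i)) * st (\<Sum>i\<in>I. b j i * st (b k i)))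
     = (\<Sum>i\<in>I. \<Sum>l\<in>I. S i l * st (S i l))"
  proof -
    have "(\<Sum>j\<in>J. \<Sum>k\<in>J. (\<Sum>i\<in>I. b j i * st (b k i)) * st (\<Sum>i\<in>I. b j i * st (b k i)))
      = (\<Sum>j\<in>J. \<Sum>k\<in>J. \<Sum>i\<in>I. \<Sum>l\<in>I. (b j i * st (b k i)) * (b k l * st (b j l)))"
      by (simp add: st_sum st_mult sum_product mult.commute)
    also have "\<dots> = (\<Sum>j\<in>J. \<Sum>i\<in>I. \<Sum>k\<in>J. \<Sum>l\<in>I. (b j i * st (b k i)) * (b k l * st (b j l)))"
      by (rule sum.cong[OF refl], rule sum.swap)
    also have "\<dots> = (\<Sum>j\<in>J. \<Sum>i\<in>I. \<Sum>l\<in>I. \<Sum>k\<in>J. (b j i * st (b k i)) * (b k l * st (b j l)))"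
      by (rule sum.cong[OF refl], rule sum.cong[OF refl], rule sum.swap)
    also have "\<dots> = (\<Sum>i\<in>I. \<Sum>j\<in>J. \<Sum>l\<in>I. \<Sum>k\<in>J. (b j i * st (b k i)) * (b k l * st (b j l)))"
      by (rule sum.swap)
    also have "\<dots> = (\<Sum>i\<in>I. \<Sum>l\<in>I. \<Sum>j\<in>J. \<Sum>k\<in>J. (b j i * st (b k i)) * (b k l * st (b j l)))"
      by (rule sum.cong[OF refl], rule sum.swap)
    also have "\<dots> = (\<Sum>i\<in>I. \<Sum>l\<in>I. S i l * (\<Sum>j\<in>J. b j l * st (b j i)))"
      unfolding S_def sum_product by (intro sum.cong refl) (simp only: ac_simps)
    also have "\<dots> = (\<Sum>i\<in>I. \<Sum>l\<in>I. S i l * st (S i l))"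
      by (simp only: sS)
    finally show ?thesis .
  qed
  have step2: "(\<Sum>j\<in>J. \<Sum>i\<in>I. b j i * st (b j i)) = (\<Sum>i\<in>I. p i)"
    unfolding p_def S_def by (rule sum.swap)
  define T where "T i l = (if i = l then 0 else S i l * st (S i l)) + of_real (1 / (2 * real (card I))) * (p i - p l)^2" for i l
  have TK: "inK (T i l)" for i l
  proof -
    have "st (p i - p l) = p i - p l" by (simp add: st_diff sp)
    hence "inK (of_real (1 / (2 * real (card I))) * (p i - p l)^2)"
      by (intro inK_scale) (auto simp: power2_eq_square intro: inK_sq)
    thus ?thesis unfolding T_def by (auto intro: inK_add inK_ysty)
  qed
  have split: "(\<Sum>l\<in>I. S i l * st (S i l)) = (\<Sum>l\<in>I. if i = l then 0 else S i l * st (S i l)) + (if i \<in> I then p i ^ 2 else 0)" for i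
  proof -
    have "(\<Sum>l\<in>I. S i l * st (S i l)) = (\<Sum>l\<in>I. (if i = l then 0 else S i l * st (S i l)) + (if i = l then S i l * st (S i l) else 0))"
      by (rule sum.cong) auto
    also have "\<dots> = (\<Sum>l\<in>I. if i = l then 0 else S i l * st (S i l)) + (if i \<in> I then S i i * st (S i i) else 0)"
      by (simp add: sum.distrib fI)
    finally show ?thesis using sp by (simp add: p_def power2_eq_square)
  qed
  have "(\<Sum>i\<in>I. \<Sum>l\<in>I. S i l * st (S i l)) - of_real (1 / real (card I)) * (\<Sum>i\<in>I. p i)^2
      = (\<Sum>i\<in>I. \<Sum>l\<in>I. T i l)"
  proof (cases "I = {}")
    case True thus ?thesis by simp
  next
    case False
    hence cI: "real (card I) > 0" using fI by (simp add: card_gt_0_iff)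
    have "(\<Sum>i\<in>I. \<Sum>l\<in>I. T i l) = (\<Sum>i\<in>I. \<Sum>l\<in>I. if i = l then 0 else S i l * st (S i l))
        + of_real (1 / (2 * real (card I))) * (\<Sum>i\<in>I. \<Sum>l\<in>I. (p i - p l)^2)"
      unfolding T_def by (simp add: sum.distrib sum_distrib_left)
    also have "of_real (1 / (2 * real (card I))) * (\<Sum>i\<in>I. \<Sum>l\<in>I. (p i - p l)^2)
       = (\<Sum>i\<in>I. p i^2) - of_real (1 / real (card I)) * (\<Sum>i\<in>I. p i)^2"
    proof -
      have "of_real (1 / (2 * real (card I))) * (of_real (2 * real (card I)) :: 'a) = 1"
        using cI by (simp flip: of_real_mult)
      moreover have "of_real (1 / (2 * real (card I))) * 2 = (of_real (1 / real (card I)) :: 'a)"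
      proof -
        have two: "(2::'a) = of_real 2" by simp
        have "of_real (1 / (2 * real (card I))) * (2::'a) = of_real (1 / (2 * real (card I)) * 2)"
          by (subst two) (simp only: of_real_mult)
        thus ?thesis using cI by simp
      qed
      ultimately show ?thesis unfolding var_identity[OF fI]
        by (simp add: right_diff_distrib mult.assoc flip: mult.assoc)
    qed
    finally show ?thesis using split by (simp add: sum.distrib)
  qed
  thus ?thesis unfolding step1 step2 using TK by (auto intro: inK_sum)
qed

end

lemma power_sum_lists:
  fixes x :: "'i \<Rightarrow> 'a::comm_semiring_1"
  assumes fA: "finite A"
  shows "(\<Sum>l\<in>A. x l)^m = (\<Sum>xs\<in>{xs. set xs \<subseteq> A \<and> length xs = m}. prod_list (map x xs))"
proof (induction m)
  case 0
  have "{xs. set xs \<subseteq> A \<and> length xs = 0} = {[]}" by auto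
  thus ?case by simp
next
  case (Suc m)
  let ?L = "{xs. set xs \<subseteq> A \<and> length xs = m}"
  have inj: "inj_on (\<lambda>(xs, n). n # xs) (?L \<times> A)" by (auto simp: inj_on_def)
  have "(\<Sum>xs\<in>{xs. set xs \<subseteq> A \<and> length xs = Suc m}. prod_list (map x xs))
      = (\<Sum>(xs, n)\<in>?L \<times> A. prod_list (map x (n # xs)))"
    unfolding lists_length_Suc_eq by (subst sum.reindex[OF inj]) (simp add: case_prod_unfold)
  also have "\<dots> = (\<Sum>xs\<in>?L. \<Sum>n\<in>A. x n * prod_list (map x xs))"
    by (simp add: sum.cartesian_product)
  also have "\<dots> = (\<Sum>l\<in>A. x l) * (\<Sum>xs\<in>?L. prod_list (map x xs))"
    by (simp add: sum_distrib_left sum_distrib_right sum.swap[of _ ?L A])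
  finally show ?case using Suc by simp
qed

lemma power_sum_msets:
  fixes x :: "'i \<Rightarrow> 'a::comm_semiring_1"
  assumes fA: "finite A"
  shows "(\<Sum>l\<in>A. x l)^m = (\<Sum>M\<in>multisets_of_size A m.
      of_nat (card {xs. set xs \<subseteq> A \<and> length xs = m \<and> mset xs = M}) * prod_mset (image_mset x M))"
proof -
  let ?L = "{xs. set xs \<subseteq> A \<and> length xs = m}"
  have fL: "finite ?L" using finite_lists_length_eq[OF fA] .
  have sub: "mset ` ?L \<subseteq> multisets_of_size A m" by (auto simp: multisets_of_size_def)
  have "(\<Sum>xs\<in>?L. prod_list (map x xs)) = (\<Sum>M\<in>multisets_of_size A m. \<Sum>xs\<in>{xs\<in>?L. mset xs = M}. prod_list (map x xs))"
    by (rule sum.group[OF fL finite_multisets_of_size[OF fA] sub, symmetric])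
  also have "\<dots> = (\<Sum>M\<in>multisets_of_size A m. \<Sum>xs\<in>{xs\<in>?L. mset xs = M}. prod_mset (image_mset x M))"
    by (intro sum.cong refl) (auto simp flip: prod_mset_prod_list mset_map)
  also have "\<dots> = (\<Sum>M\<in>multisets_of_size A m.
      of_nat (card {xs. set xs \<subseteq> A \<and> length xs = m \<and> mset xs = M}) * prod_mset (image_mset x M))"
    by (intro sum.cong refl) (simp add: conj_assoc)
  finally show ?thesis by (simp only: power_sum_lists[OF fA])
qed

context cst begin

lemma st_prod_mset: "st (prod_mset (image_mset f M)) = prod_mset (image_mset (\<lambda>l. st (f l)) M)"
  by (induction M) (auto simp: st_mult mult.commute)

end

context cst begin

lemma key:
  fixes ip :: "'e \<Rightarrow> 'e \<Rightarrow> 'a" and a :: "nat \<Rightarrow> nat \<Rightarrow> 'a"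
  assumes ipexp: "\<And>j k. ip (\<tau> j) (\<tau> k) = (\<Sum>l\<in>{1..d}. a j l * st (a k l))"
    and unit: "\<forall>j\<in>{1..n}. ip (\<tau> j) (\<tau> j) = 1"
  shows "inK ((\<Sum>j=1..n. \<Sum>k=1..n. ip (\<tau> j) (\<tau> k) ^ m * st (ip (\<tau> j) (\<tau> k) ^ m))
           - of_real (real n ^ 2 / real ((d + m - 1) choose m)))"
proof -
  define MS where "MS = multisets_of_size {1..d} m"
  define w where "w M = card {xs. set xs \<subseteq> {1..d} \<and> length xs = m \<and> mset xs = M}" for M
  define P where "P j M = prod_mset (image_mset (a j) M)" for j M
  define b where "b j M = of_real (sqrt (real (w M))) * P j M" for j M
  have fMS: "finite MS" unfolding MS_def by auto
  have cMS: "card MS = (d + m - 1) choose m" unfolding MS_def using card_multisets_of_size[of "{1..d}" m] by simp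
  have Y: "ip (\<tau> j) (\<tau> k) ^ m = (\<Sum>M\<in>MS. b j M * st (b k M))" for j k
  proof -
    have "ip (\<tau> j) (\<tau> k) ^ m = (\<Sum>M\<in>MS. of_nat (w M) * prod_mset (image_mset (\<lambda>l. a j l * st (a k l)) M))"
      unfolding ipexp MS_def w_def by (rule power_sum_msets) simp
    also have "\<dots> = (\<Sum>M\<in>MS. b j M * st (b k M))"
    proof (intro sum.cong refl)
      fix M
      have "prod_mset (image_mset (\<lambda>l. a j l * st (a k l)) M) = P j M * st (P k M)"
        unfolding P_def st_prod_mset by (simp add: prod_mset.distrib)
      moreover have "b j M * st (b k M) = of_nat (w M) * (P j M * st (P k M))"
      proof -
        have sb: "st (b k M) = of_real (sqrt (real (w M))) * st (P k M)" unfolding b_def by (rule st_ofr_mult)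
        have "b j M * st (b k M) = (of_real (sqrt (real (w M))) * of_real (sqrt (real (w M)))) * (P j M * st (P k M))"
          unfolding sb unfolding b_def by (simp only: ac_simps)
        also have "of_real (sqrt (real (w M))) * of_real (sqrt (real (w M))) = (of_nat (w M) :: 'a)"
          by (simp flip: of_real_mult)
        finally show ?thesis .
      qed
      ultimately show "of_nat (w M) * prod_mset (image_mset (\<lambda>l. a j l * st (a k l)) M) = b j M * st (b k M)"
        by simp
    qed
    finally show ?thesis .
  qed
  have g: "inK ((\<Sum>j\<in>{1..n}. \<Sum>k\<in>{1..n}. (\<Sum>M\<in>MS. b j M * st (b k M)) * st (\<Sum>M\<in>MS. b j M * st (b k M)))
     - of_real (1 / real (card MS)) * (\<Sum>j\<in>{1..n}. \<Sum>M\<in>MS. b j M * st (b j M))^2)"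
    by (rule gram) (auto simp: fMS)
  have "(\<Sum>j\<in>{1..n}. \<Sum>M\<in>MS. b j M * st (b j M)) = (\<Sum>j\<in>{1..n}. 1)"
    by (intro sum.cong refl) (simp add: Y[symmetric] unit)
  also have "\<dots> = of_nat n" by simp
  finally have s: "(\<Sum>j\<in>{1..n}. \<Sum>M\<in>MS. b j M * st (b j M)) = of_nat n" .
  have "of_real (1 / real (card MS)) * (of_nat n :: 'a)^2 = of_real (real n ^ 2 / real ((d + m - 1) choose m))"
  proof -
    have "(of_nat n :: 'a)^2 = of_real (real n ^ 2)" by simp
    hence "of_real (1 / real (card MS)) * (of_nat n :: 'a)^2 = of_real (1 / real (card MS) * real n ^ 2)"
      by (simp only: of_real_mult)
    thus ?thesis unfolding cMS by simp
  qed
  with g s show ?thesis by (simp add: Y[symmetric])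
qed

lemma alg_leI: "inK (y - x) \<Longrightarrow> st x = x \<Longrightarrow> alg_le cj st x y"
proof -
  assume k: "inK (y - x)" and sx: "st x = x"
  have "st (y - x) = y - x" using k unfolding inK_def by blast
  hence "st y = y" using sx by (simp add: st_diff)
  thus ?thesis unfolding alg_le_def using sx inK_pos[OF k] by blast
qed

end

theorem theorem2p13:
  fixes cj :: "'a::{comm_ring_1,real_normed_algebra_1,banach}" and st :: "'a \<Rightarrow> 'a"
    and act :: "'a \<Rightarrow> 'e::ab_group_add \<Rightarrow> 'e" and ip :: "'e \<Rightarrow> 'e \<Rightarrow> 'a"
    and \<tau> :: "nat \<Rightarrow> 'e" and n d :: nat
  assumes alg: "(W_star cj st \<and> sigma_finite_alg st) \<or> AW_star cj st"
    and hm: "hilbert_module cj st act ip"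
    and rk: "has_rank act ip d"
    and nd: "n \<ge> d"
    and unit: "\<forall>j\<in>{1..n}. ip (\<tau> j) (\<tau> j) = 1"
  shows "(\<forall>m::nat. m \<ge> 1 \<longrightarrow>
            alg_le cj st (\<Sum>j=1..n. \<Sum>k=1..n. ip (\<tau> j) (\<tau> k) ^ m * ip (\<tau> k) (\<tau> j) ^ m)
                         (of_real (\<Sum>j=1..n. \<Sum>k=1..n. norm (ip (\<tau> j) (\<tau> k)) ^ (2 * m))) \<and>
            alg_le cj st (of_real (real n ^ 2 / real ((d + m - 1) choose m)))
                         (\<Sum>j=1..n. \<Sum>k=1..n. ip (\<tau> j) (\<tau> k) ^ m * ip (\<tau> k) (\<tau> j) ^ m))
       \<and> alg_le cj st (\<Sum>j=1..n. \<Sum>k=1..n. ip (\<tau> j) (\<tau> k) * ip (\<tau> k) (\<tau> j))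
                      (of_real (\<Sum>j=1..n. \<Sum>k=1..n. norm (ip (\<tau> j) (\<tau> k)) ^ 2))
       \<and> alg_le cj st (of_real (real n ^ 2 / real d))
                      (\<Sum>j=1..n. \<Sum>k=1..n. ip (\<tau> j) (\<tau> k) * ip (\<tau> k) (\<tau> j))
       \<and> (n \<ge> 2 \<longrightarrow>
            (\<forall>m::nat. m \<ge> 1 \<longrightarrow>
               Max {norm (ip (\<tau> j) (\<tau> k)) ^ (2 * m) | j k. j \<in> {1..n} \<and> k \<in> {1..n} \<and> j \<noteq> k}
                 \<ge> 1 / (real n - 1) * (real n / real ((d + m - 1) choose m) - 1))
          \<and> Max {norm (ip (\<tau> j) (\<tau> k)) ^ 2 | j k. j \<in> {1..n} \<and> k \<in> {1..n} \<and> j \<noteq> k}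
              \<ge> (real n - real d) / (real d * (real n - 1)))"
proof -
  have w1: "W_star cj st \<Longrightarrow> cstar_comm cj st" unfolding W_star_def by (rule conjunct1)
  have w2: "AW_star cj st \<Longrightarrow> cstar_comm cj st" unfolding AW_star_def by (rule conjunct1)
  have cc: "cstar_comm cj st" using alg w1 w2 by blast
  interpret cst cj st by (rule cst.intro[OF cc])
  have ip_add: "ip (x + y) z = ip x z + ip y z" for x y z using hm unfolding hilbert_module_def by (elim conjE) (erule allE)+
  have ip_act: "ip (act c x) y = c * ip x y" for c x y using hm unfolding hilbert_module_def by (elim conjE) (erule allE)+
  have ip_sym: "ip y x = st (ip x y)" for x y using hm unfolding hilbert_module_def by (elim conjE) (erule allE)+
  have ip_zero: "ip 0 z = 0" for z using ip_add[of 0 0 z] by simp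
  have ip_sum: "ip (sum f A) z = (\<Sum>l\<in>A. ip (f l) z)" for f :: "nat \<Rightarrow> 'e" and A z
    by (induction A rule: infinite_finite_induct) (auto simp: ip_zero ip_add)
  obtain \<omega> :: "nat \<Rightarrow> 'e" where om: "\<And>x. x = (\<Sum>j=1..d. act (ip x (\<omega> j)) (\<omega> j))"
    using rk unfolding has_rank_def by blast
  define a where "a j l = ip (\<tau> j) (\<omega> l)" for j l
  have ipexp: "ip (\<tau> j) (\<tau> k) = (\<Sum>l\<in>{1..d}. a j l * st (a k l))" for j k
  proof -
    have "ip (\<tau> j) (\<tau> k) = ip (\<Sum>l=1..d. act (a j l) (\<omega> l)) (\<tau> k)"
    proof -
      have e: "\<tau> j = (\<Sum>l=1..d. act (a j l) (\<omega> l))" unfolding a_def by (rule om)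
      show ?thesis by (subst e) (rule refl)
    qed
    also have "\<dots> = (\<Sum>l\<in>{1..d}. a j l * ip (\<omega> l) (\<tau> k))" by (simp add: ip_sum ip_act)
    also have "\<dots> = (\<Sum>l\<in>{1..d}. a j l * st (a k l))"
    proof -
      have "ip (\<omega> l) (\<tau> k) = st (a k l)" for l unfolding a_def by (rule ip_sym)
      thus ?thesis by simp
    qed
    finally show ?thesis .
  qed
  define X where "X m = (\<Sum>j=1..n. \<Sum>k=1..n. ip (\<tau> j) (\<tau> k) ^ m * ip (\<tau> k) (\<tau> j) ^ m)" for m
  define D where "D m = real ((d + m - 1) choose m)" for m
  have Xst: "X m = (\<Sum>j=1..n. \<Sum>k=1..n. ip (\<tau> j) (\<tau> k) ^ m * st (ip (\<tau> j) (\<tau> k) ^ m))" for m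
  proof -
    have pw: "ip (\<tau> j) (\<tau> k) ^ m * ip (\<tau> k) (\<tau> j) ^ m = ip (\<tau> j) (\<tau> k) ^ m * st (ip (\<tau> j) (\<tau> k) ^ m)" for j k
      by (simp only: st_power st_st ip_sym[of "\<tau> j" "\<tau> k"])
    show ?thesis unfolding X_def pw ..
  qed
  have saX: "st (X m) = X m" for m unfolding Xst by (simp add: st_sum st_sa_sq)
  have lowK: "inK (X m - of_real (real n ^ 2 / D m))" for m
    unfolding Xst D_def by (rule key[where ip=ip and \<tau>=\<tau> and d=d and a=a and n=n, OF ipexp unit])
  have upK: "inK (of_real (\<Sum>j=1..n. \<Sum>k=1..n. norm (ip (\<tau> j) (\<tau> k)) ^ (2 * m)) - X m)" for m
  proof -
    have "of_real (\<Sum>j=1..n. \<Sum>k=1..n. norm (ip (\<tau> j) (\<tau> k)) ^ (2 * m)) - X m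
      = (\<Sum>j=1..n. \<Sum>k=1..n. of_real (norm (ip (\<tau> j) (\<tau> k)) ^ (2 * m)) - ip (\<tau> j) (\<tau> k) ^ m * st (ip (\<tau> j) (\<tau> k) ^ m))"
      unfolding Xst by (simp add: sum_subtractf del: of_real_power)
    moreover have "inK (of_real (norm (ip (\<tau> j) (\<tau> k)) ^ (2 * m)) - ip (\<tau> j) (\<tau> k) ^ m * st (ip (\<tau> j) (\<tau> k) ^ m))" for j k
    proof (rule inK_bound)
      have "norm (ip (\<tau> j) (\<tau> k) ^ m) \<le> norm (ip (\<tau> j) (\<tau> k)) ^ m" by (rule norm_power_ineq)
      hence "(norm (ip (\<tau> j) (\<tau> k) ^ m))\<^sup>2 \<le> (norm (ip (\<tau> j) (\<tau> k)) ^ m)\<^sup>2"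
        by (rule power_mono) simp
      thus "(norm (ip (\<tau> j) (\<tau> k) ^ m))\<^sup>2 \<le> norm (ip (\<tau> j) (\<tau> k)) ^ (2 * m)"
        by (simp add: power_mult mult.commute)
    qed
    ultimately show ?thesis by (auto intro!: inK_sum)
  qed
  have partA: "alg_le cj st (X m) (of_real (\<Sum>j=1..n. \<Sum>k=1..n. norm (ip (\<tau> j) (\<tau> k)) ^ (2 * m)))
      \<and> alg_le cj st (of_real (real n ^ 2 / D m)) (X m)" for m
    using alg_leI[OF upK saX] alg_leI[OF lowK st_of_real] by blast
  have partC: "0 \<le> Max {norm (ip (\<tau> j) (\<tau> k)) ^ (2 * m) | j k. j \<in> {1..n} \<and> k \<in> {1..n} \<and> j \<noteq> k}
     \<and> Max {norm (ip (\<tau> j) (\<tau> k)) ^ (2 * m) | j k. j \<in> {1..n} \<and> k \<in> {1..n} \<and> j \<noteq> k}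
                 \<ge> 1 / (real n - 1) * (real n / D m - 1)" if n2: "n \<ge> 2" for m
  proof -
    define S where "S = {norm (ip (\<tau> j) (\<tau> k)) ^ (2 * m) | j k. j \<in> {1..n} \<and> k \<in> {1..n} \<and> j \<noteq> k}"
    have "S \<subseteq> (\<lambda>(j, k). norm (ip (\<tau> j) (\<tau> k)) ^ (2 * m)) ` ({1..n} \<times> {1..n})"
      unfolding S_def by auto
    hence fin: "finite S" by (rule finite_subset) simp
    have le: "norm (ip (\<tau> j) (\<tau> k)) ^ (2 * m) \<le> Max S" if "j \<in> {1..n}" "k \<in> {1..n}" "j \<noteq> k" for j k
      using that by (intro Max_ge fin) (auto simp: S_def)
    define Mx where "Mx = Max S"
    have M0: "0 \<le> Mx"
    proof -
      have "(1::nat) \<in> {1..n}" "(2::nat) \<in> {1..n}" "(1::nat) \<noteq> 2" using n2 by auto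
      from le[OF this] have "norm (ip (\<tau> 1) (\<tau> 2)) ^ (2 * m) \<le> Mx" unfolding Mx_def .
      moreover have "0 \<le> norm (ip (\<tau> 1) (\<tau> 2)) ^ (2 * m)" by simp
      ultimately show ?thesis by linarith
    qed
    define Y where "Y j k = ip (\<tau> j) (\<tau> k) ^ m * ip (\<tau> k) (\<tau> j) ^ m" for j k
    define Z where "Z = (\<Sum>j=1..n. \<Sum>k=1..n. if j = k then 0 else Y j k)"
    have rowsplit: "(\<Sum>k=1..n. Y j k) = (\<Sum>k=1..n. if j = k then 0 else Y j k) + 1" if "j \<in> {1..n}" for j
    proof -
      have "(\<Sum>k=1..n. Y j k) = (\<Sum>k=1..n. (if j = k then 0 else Y j k) + (if j = k then Y j k else 0))"
        by (rule sum.cong) auto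
      also have "\<dots> = (\<Sum>k=1..n. if j = k then 0 else Y j k) + Y j j"
        using that by (simp add: sum.distrib)
      also have "Y j j = 1" using unit that unfolding Y_def by simp
      finally show ?thesis .
    qed
    have XZ: "X m = Z + of_nat n"
    proof -
      have "X m = (\<Sum>j=1..n. (\<Sum>k=1..n. if j = k then 0 else Y j k) + 1)"
        unfolding X_def Y_def[symmetric] by (rule sum.cong[OF refl], rule rowsplit, assumption)
      thus ?thesis unfolding Z_def by (simp add: sum.distrib)
    qed
    have ZK: "inK (Z - of_real (real n ^ 2 / D m - real n))"
      using lowK[of m] unfolding XZ by (simp add: algebra_simps)
    show ?thesis
    proof (cases "real n ^ 2 / D m - real n \<le> 0")
      case True
      have n0: "real n > 0" using n2 by simp
      have "real n * (real n / D m) \<le> real n * 1" using True by (simp add: power2_eq_square)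
      hence "real n / D m \<le> 1" using n0 by (simp only: mult_le_cancel_left_pos)
      hence "1 / (real n - 1) * (real n / D m - 1) \<le> 0" using n2 by (intro mult_nonneg_nonpos) auto
      thus ?thesis using M0 unfolding Mx_def S_def by simp
    next
      case False
      hence cpos: "real n ^ 2 / D m - real n \<ge> 0" by simp
      have "real n ^ 2 / D m - real n \<le> norm Z" by (rule inK_norm[OF ZK cpos])
      also have "norm Z \<le> (\<Sum>j=1..n. \<Sum>k=1..n. norm (if j = k then 0 else Y j k))"
        unfolding Z_def by (rule order_trans[OF norm_sum], rule sum_mono, rule norm_sum)
      also have "\<dots> \<le> (\<Sum>j=1..n. \<Sum>k=1..n. if j = k then 0 else Mx)"
      proof (intro sum_mono)
        fix j k assume jk: "j \<in> {1..n}" "k \<in> {1..n}"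
        show "norm (if j = k then 0 else Y j k) \<le> (if j = k then 0 else Mx)"
        proof (cases "j = k")
          case False
          have "norm (Y j k) \<le> norm (ip (\<tau> j) (\<tau> k) ^ m) * norm (ip (\<tau> k) (\<tau> j) ^ m)"
            unfolding Y_def by (rule norm_mult_ineq)
          also have "\<dots> \<le> norm (ip (\<tau> j) (\<tau> k)) ^ m * norm (ip (\<tau> k) (\<tau> j)) ^ m"
            by (intro mult_mono norm_power_ineq) auto
          also have "norm (ip (\<tau> k) (\<tau> j)) = norm (ip (\<tau> j) (\<tau> k))"
            using ip_sym[of "\<tau> j" "\<tau> k"] norm_st by metis
          also have "norm (ip (\<tau> j) (\<tau> k)) ^ m * norm (ip (\<tau> j) (\<tau> k)) ^ m = norm (ip (\<tau> j) (\<tau> k)) ^ (2 * m)"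
            by (simp add: power_add[symmetric] mult_2)
          also have "\<dots> \<le> Mx" unfolding Mx_def using le jk False by blast
          finally show ?thesis using False by simp
        qed simp
      qed
      also have "\<dots> = real n * ((real n - 1) * Mx)"
      proof -
        have "(\<Sum>k=1..n. if j = k then 0 else Mx) = (real n - 1) * Mx" if "j \<in> {1..n}" for j
        proof -
          have "(\<Sum>k=1..n. Mx) = (\<Sum>k=1..n. (if j = k then 0 else Mx) + (if j = k then Mx else 0))"
            by (rule sum.cong) auto
          also have "\<dots> = (\<Sum>k=1..n. if j = k then 0 else Mx) + Mx"
            using that by (simp add: sum.distrib)
          finally show ?thesis by (simp add: algebra_simps)
        qed
        thus ?thesis by simp
      qed
      finally have ineq: "real n * (real n / D m - 1) \<le> real n * ((real n - 1) * Mx)"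
        by (simp add: power2_eq_square algebra_simps)
      have n0: "real n > 0" using n2 by simp
      have "real n / D m - 1 \<le> (real n - 1) * Mx" using ineq n0 by (simp only: mult_le_cancel_left_pos)
      hence "1 / (real n - 1) * (real n / D m - 1) \<le> Mx" using n2 by (simp add: field_simps)
      thus ?thesis using M0 unfolding Mx_def S_def by simp
    qed
  qed
  show ?thesis
  proof (intro conjI allI impI)
    fix m :: nat assume "m \<ge> 1"
    show "alg_le cj st (\<Sum>j=1..n. \<Sum>k=1..n. ip (\<tau> j) (\<tau> k) ^ m * ip (\<tau> k) (\<tau> j) ^ m)
                         (of_real (\<Sum>j=1..n. \<Sum>k=1..n. norm (ip (\<tau> j) (\<tau> k)) ^ (2 * m)))"
      using partA[of m] unfolding X_def by blast
    show "alg_le cj st (of_real (real n ^ 2 / real ((d + m - 1) choose m)))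
                         (\<Sum>j=1..n. \<Sum>k=1..n. ip (\<tau> j) (\<tau> k) ^ m * ip (\<tau> k) (\<tau> j) ^ m)"
      using partA[of m] unfolding X_def D_def by blast
  next
    show "alg_le cj st (\<Sum>j=1..n. \<Sum>k=1..n. ip (\<tau> j) (\<tau> k) * ip (\<tau> k) (\<tau> j))
                      (of_real (\<Sum>j=1..n. \<Sum>k=1..n. norm (ip (\<tau> j) (\<tau> k)) ^ 2))"
      using partA[of 1] unfolding X_def by simp
    show "alg_le cj st (of_real (real n ^ 2 / real d))
                      (\<Sum>j=1..n. \<Sum>k=1..n. ip (\<tau> j) (\<tau> k) * ip (\<tau> k) (\<tau> j))"
      using partA[of 1] unfolding X_def D_def by simp
  next
    fix m :: nat assume "n \<ge> 2" "m \<ge> 1"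
    thus "Max {norm (ip (\<tau> j) (\<tau> k)) ^ (2 * m) | j k. j \<in> {1..n} \<and> k \<in> {1..n} \<and> j \<noteq> k}
                 \<ge> 1 / (real n - 1) * (real n / real ((d + m - 1) choose m) - 1)"
      using partC[of m] unfolding D_def by blast
  next
    assume n2: "n \<ge> 2"
    have c1: "Max {norm (ip (\<tau> j) (\<tau> k)) ^ 2 | j k. j \<in> {1..n} \<and> k \<in> {1..n} \<and> j \<noteq> k}
                 \<ge> 1 / (real n - 1) * (real n / real d - 1)"
      using partC[OF n2, of 1] unfolding D_def by simp
    have c0: "Max {norm (ip (\<tau> j) (\<tau> k)) ^ 2 | j k. j \<in> {1..n} \<and> k \<in> {1..n} \<and> j \<noteq> k} \<ge> 0"
      using partC[OF n2, of 1] by simp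
    show "Max {norm (ip (\<tau> j) (\<tau> k)) ^ 2 | j k. j \<in> {1..n} \<and> k \<in> {1..n} \<and> j \<noteq> k}
              \<ge> (real n - real d) / (real d * (real n - 1))"
    proof (cases "d = 0")
      case True thus ?thesis using c0 by simp
    next
      case False
      have "(real n - real d) / (real d * (real n - 1)) = 1 / (real n - 1) * (real n / real d - 1)"
        using False n2 by (simp add: field_simps)
      thus ?thesis using c1 by simp
    qed
  qed
qed


end
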